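(* For every base $b\ge 2$ there exist infinitely many $b$-wMRH numbers that are not $b$-MRH numbers.
   Context: Fix a base $b\ge 2$. $s_b(N)$ is the sum of the base-$b$ digits of $N$. For a positive integer $X$, its reversal $X^R$ is the integer whose base-$b$ representation is that of $X$ written in reverse order (leading zeros of the result are dropped). A positive integer $N$ is a $b$-wMRH number if there exists an integer $A\ge 0$ such that $N=(A+s_b(N))\cdot(A+s_b(N))^R$. A positive integer $N$ is a $b$-MRH number if there exists a positive integer $M$ such that $N=(M s_b(N))\cdot (M s_b(N))^R$. *)

theory Defs
  imports Main
begin

fun digits :: "nat \<Rightarrow> nat \<Rightarrow> nat list" where
  "digits b n = (if b < 2 \<or> n = 0 then [] else n mod b # digits b (n div b))"

declare digits.simps[simp del]

fun from_digits :: "nat \<Rightarrow> nat list \<Rightarrow> nat" where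
  "from_digits b [] = 0"
| "from_digits b (d # ds) = d + b * from_digits b ds"

definition digit_sum :: "nat \<Rightarrow> nat \<Rightarrow> nat" where
  "digit_sum b n = sum_list (digits b n)"

text \<open>Reversal: read the base-b digits of X in reverse order (leading zeros vanish).\<close>
definition reversal :: "nat \<Rightarrow> nat \<Rightarrow> nat" where
  "reversal b X = from_digits b (rev (digits b X))"

definition wMRH :: "nat \<Rightarrow> nat \<Rightarrow> bool" where
  "wMRH b N \<longleftrightarrow> N > 0 \<and>
     (\<exists>A::nat. N = (A + digit_sum b N) * reversal b (A + digit_sum b N))"

definition MRH :: "nat \<Rightarrow> nat \<Rightarrow> bool" where
  "MRH b N \<longleftrightarrow> N > 0 \<and>
     (\<exists>M::nat. M > 0 \<and> N = (M * digit_sum b N) * reversal b (M * digit_sum b N))"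

end

theory Submission
  imports Defs "HOL-Library.Infinite_Set"
begin

lemma dm_div: "0 < (b::nat) \<Longrightarrow> r < b \<Longrightarrow> (q * b + r) div b = q" by simp
lemma dm_mod: "0 < (b::nat) \<Longrightarrow> r < b \<Longrightarrow> (q * b + r) mod b = r" by simp

lemma ds_rec: "b \<ge> 2 \<Longrightarrow> digit_sum b n = n mod b + digit_sum b (n div b)"
  unfolding digit_sum_def
  by (cases "n = 0") (simp_all add: digits.simps[of b n] digits.simps[of b 0])

lemma ds_zero: "digit_sum b 0 = 0"
  unfolding digit_sum_def by (simp add: digits.simps)

lemma ds_le: "b \<ge> 2 \<Longrightarrow> digit_sum b n \<le> n"
proof (induction n rule: less_induct)
  case (less n)
  show ?case
  proof (cases "n = 0")
    case True then show ?thesis by (simp add: ds_zero)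
  next
    case False
    have "n div b < n" using False less.prems by simp
    then have "digit_sum b (n div b) \<le> n div b" by (rule less.IH[OF _ less.prems])
    moreover have "n mod b + n div b \<le> n"
      proof -
      have "n div b \<le> b * (n div b)" using less.prems by simp
      then show ?thesis using div_mult_mod_eq[of n b] mult.commute[of b "n div b"] by linarith
    qed
    ultimately show ?thesis using ds_rec[OF less.prems, of n] by linarith
  qed
qed

lemma ds_shift: "b \<ge> 2 \<Longrightarrow> r < b^k \<Longrightarrow> digit_sum b (q * b^k + r) = digit_sum b q + digit_sum b r"
proof (induction k arbitrary: r)
  case 0 then show ?case by (simp add: ds_zero)
next
  case (Suc k)
  have m: "(q * b^Suc k + r) mod b = r mod b" by (simp add: mod_add_left_eq[symmetric])
  have eq1: "q * b^Suc k + r = r + (q*b^k)*b" by (simp add: algebra_simps)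
  have b0: "b \<noteq> 0" using Suc.prems by simp
  have d: "(q * b^Suc k + r) div b = q * b^k + r div b"
    by (subst eq1) (rule div_mult_self1[OF b0])
  have "r div b < b^k" using Suc.prems by (simp add: div_less_iff_less_mult mult.commute)
  then have "digit_sum b (q * b^k + r div b) = digit_sum b q + digit_sum b (r div b)"
    using Suc by blast
  then show ?case using ds_rec[OF Suc.prems(1), of "q * b^Suc k + r"] ds_rec[OF Suc.prems(1), of r] m d by simp
qed

lemma ds_pm1: "b \<ge> 2 \<Longrightarrow> digit_sum b (b^k - 1) = k * (b - 1)"
proof (induction k)
  case 0 then show ?case by (simp add: ds_zero)
next
  case (Suc k)
  have pos: "b^k \<ge> 1" using Suc.prems by simp
  have e: "b^Suc k - 1 = (b^k - 1) * b + (b - 1)" using pos Suc.prems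
    by (simp add: algebra_simps diff_mult_distrib)
  have m: "(b^Suc k - 1) mod b = b - 1" unfolding e by (rule dm_mod) (use Suc.prems in auto)
  have d: "(b^Suc k - 1) div b = b^k - 1" unfolding e by (rule dm_div) (use Suc.prems in auto)
  show ?case using ds_rec[OF Suc.prems, of "b^Suc k - 1"] m d Suc by simp
qed

lemma ds_pm2: "b \<ge> 2 \<Longrightarrow> k \<ge> 1 \<Longrightarrow> digit_sum b (b^k - 2) = (b - 2) + (k - 1) * (b - 1)"
proof -
  assume b: "b \<ge> 2" and k: "k \<ge> 1"
  obtain j where j: "k = Suc j" using k by (cases k) auto
  have pos: "b^j \<ge> 1" using b by simp
  have e: "b^k - 2 = (b^j - 1) * b + (b - 2)" using pos b j
    by (simp add: algebra_simps diff_mult_distrib)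
  have m: "(b^k - 2) mod b = b - 2" unfolding e by (rule dm_mod) (use b in auto)
  have d: "(b^k - 2) div b = b^j - 1" unfolding e by (rule dm_div) (use b in auto)
  show ?thesis using ds_rec[OF b, of "b^k - 2"] m d ds_pm1[OF b, of j] j by simp
qed

lemma digits_pm1: "b \<ge> 2 \<Longrightarrow> digits b (b^k - 1) = replicate k (b - 1)"
proof (induction k)
  case 0 then show ?case by (simp add: digits.simps)
next
  case (Suc k)
  have pos: "b^k \<ge> 1" using Suc.prems by simp
  have e: "b^Suc k - 1 = (b^k - 1) * b + (b - 1)" using pos Suc.prems
    by (simp add: algebra_simps diff_mult_distrib)
  have m: "(b^Suc k - 1) mod b = b - 1" unfolding e by (rule dm_mod) (use Suc.prems in auto)
  have d: "(b^Suc k - 1) div b = b^k - 1" unfolding e by (rule dm_div) (use Suc.prems in auto)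
  have "b^Suc k \<ge> b" using pos by simp
  then have nz: "b^Suc k - 1 \<noteq> 0" using Suc.prems by linarith
  show ?case using Suc m d nz by (subst digits.simps) simp
qed

lemma from_digits_digits: "b \<ge> 2 \<Longrightarrow> from_digits b (digits b n) = n"
proof (induction n rule: less_induct)
  case (less n)
  show ?case
  proof (cases "n = 0")
    case True then show ?thesis by (simp add: digits.simps)
  next
    case False
    have "n div b < n" using False less.prems by simp
    then have "from_digits b (digits b (n div b)) = n div b" by (rule less.IH[OF _ less.prems])
    then show ?thesis using False less.prems by (subst digits.simps) simp
  qed
qed

lemma rev_pm1: "b \<ge> 2 \<Longrightarrow> reversal b (b^k - 1) = b^k - 1"
  unfolding reversal_def using digits_pm1[of b k] from_digits_digits[of b "b^k - 1"] by simp

lemma sq_form: "(x::nat) \<ge> 2 \<Longrightarrow> (x - 1) * (x - 1) = (x - 2) * x + 1"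
proof -
  assume "x \<ge> 2"
  then obtain y where "x = y + 2" by (metis add.commute le_Suc_ex)
  then show ?thesis by (simp add: algebra_simps)
qed

lemma good:
  assumes b: "b \<ge> 2" and k: "k \<ge> 1" and bk: "b dvd k"
  defines "N \<equiv> (b^k - 1) * (b^k - 1)"
  shows "wMRH b N \<and> \<not> MRH b N"
proof -
  have x2: "b^k \<ge> 2" proof -
    have "b^1 \<le> b^k" using b k by (intro power_increasing) auto
    then show ?thesis using b by simp
  qed
  have Nf: "N = (b^k - 2) * b^k + 1" unfolding N_def using sq_form[OF x2] .
  have "digit_sum b N = digit_sum b (b^k - 2) + digit_sum b 1"
    unfolding Nf by (rule ds_shift[OF b]) (use x2 in simp)
  moreover have "digit_sum b 1 = 1" using ds_rec[OF b, of 1] b by (simp add: ds_zero)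
  ultimately have "digit_sum b N = (b - 2) + (k - 1) * (b - 1) + 1" using ds_pm2[OF b k] by simp
  also have "\<dots> = k * (b - 1)"
  proof -
    obtain c where c: "b = c + 2" using b by (metis add.commute le_Suc_ex)
    obtain j where j: "k = j + 1" using k by (metis add.commute le_Suc_ex)
    show ?thesis unfolding c j by (simp add: algebra_simps)
  qed
  finally have s: "digit_sum b N = k * (b - 1)" .
  have le: "k * (b - 1) \<le> b^k - 1" using ds_le[OF b, of "b^k - 1"] ds_pm1[OF b, of k] by simp
  have Npos: "N > 0" unfolding N_def using x2 by simp
  have w: "wMRH b N" unfolding wMRH_def
  proof (intro conjI Npos exI)
    show "N = (b^k - 1 - k*(b-1) + digit_sum b N) * reversal b (b^k - 1 - k*(b-1) + digit_sum b N)"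
      by (simp only: s le_add_diff_inverse2[OF le] rev_pm1[OF b]) (simp add: N_def)
  qed
  have nm: "\<not> MRH b N"
  proof
    assume "MRH b N"
    then obtain M where eq0: "N = (M * digit_sum b N) * reversal b (M * digit_sum b N)"
      unfolding MRH_def by blast
    define R where "R = reversal b (M * digit_sum b N)"
    have eq: "N = (M * (k*(b-1))) * R" unfolding R_def s[symmetric] by (rule eq0)
    have "k*(b-1) dvd N" unfolding eq by simp
    then have "digit_sum b N dvd N" unfolding s .
    moreover have "b dvd digit_sum b N" using s bk by simp
    ultimately have "b dvd N" by (rule dvd_trans[rotated])
    moreover have "N mod b = 1"
    proof -
      obtain j where j: "k = Suc j" using k by (cases k) auto
      have "N = 1 + ((b^k - 2) * b^j) * b" unfolding Nf j by (simp add: algebra_simps)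
      then have "N mod b = 1 mod b" by (simp only: mod_mult_self1)
      then show ?thesis using b by simp
    qed
    ultimately show False using b by simp
  qed
  show ?thesis using w nm by blast
qed

theorem mainTheorem15:
  fixes b :: nat
  assumes "b \<ge> 2"
  shows "infinite {N::nat. wMRH b N \<and> \<not> MRH b N}"
  unfolding infinite_nat_iff_unbounded
proof
  fix n
  define k where "k = b * (n + 1)"
  have k1: "k \<ge> 1" "b dvd k" using assms unfolding k_def by simp_all
  have nk: "n < k" unfolding k_def using assms mult_le_mono1[of 1 b "n+1"] by simp
  have kb: "k * (b - 1) \<le> b^k - 1" using ds_le[OF assms, of "b^k - 1"] ds_pm1[OF assms, of k] by simp
  have "1 \<le> b - 1" using assms by linarith
  then have "k * 1 \<le> k * (b - 1)" by (rule mult_le_mono2)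
  then have h: "k \<le> k * (b - 1)" by simp
  have kX: "k \<le> b^k - 1" using h kb by (rule order.trans)
  have XN: "b^k - 1 \<le> (b^k - 1) * (b^k - 1)" by (rule le_square)
  have gt: "n < (b^k - 1) * (b^k - 1)" using nk kX XN by linarith
  show "\<exists>m>n. m \<in> {N. wMRH b N \<and> \<not> MRH b N}"
    using gt good[OF assms k1] by blast
qed

end
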